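(* Let $n\ge 1$ and let $\mathcal F,\mathcal G\subset 2^{[n]}$ be down-sets with $|\mathcal F|\le|\mathcal G|$. Then there is a matching in the bipartite Kneser graph $KG(\mathcal F,\mathcal G)$ that covers every vertex of $\mathcal F$; equivalently, there is an injective map $\phi:\mathcal F\to\mathcal G$ such that $A\cap\phi(A)=\emptyset$ for every $A\in\mathcal F$.
   Context: $[n]=\{1,\dots,n\}$ and $2^{[n]}$ is its power set. A family $\mathcal B\subset 2^{[n]}$ is a down-set if $B\in\mathcal B$ and $A\subset B$ imply $A\in\mathcal B$. For families $\mathcal F,\mathcal G$, the bipartite Kneser graph $KG(\mathcal F,\mathcal G)$ has partite sets $\mathcal F$ and $\mathcal G$ (taken as disjoint copies) and edge set $\{(F,G):F\in\mathcal F,\ G\in\mathcal G,\ F\cap G=\emptyset\}$. *)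

theory Defs
  imports Main
begin

definition down_set :: "nat \<Rightarrow> nat set set \<Rightarrow> bool" where
  "down_set n \<B> \<longleftrightarrow> \<B> \<subseteq> Pow {1..n} \<and> (\<forall>B\<in>\<B>. \<forall>A. A \<subseteq> B \<longrightarrow> A \<in> \<B>)"

definition kneser_edge :: "nat set set \<Rightarrow> nat set set \<Rightarrow> nat set \<Rightarrow> nat set \<Rightarrow> bool" where
  "kneser_edge \<F> \<G> A B \<longleftrightarrow> A \<in> \<F> \<and> B \<in> \<G> \<and> A \<inter> B = {}"

end

theory Submission
  imports Defs
begin

lemma hall:
  assumes "finite I" "\<forall>i\<in>I. finite (S i)" "\<forall>J\<subseteq>I. card J \<le> card (\<Union>(S ` J))"
  shows "\<exists>f. inj_on f I \<and> (\<forall>i\<in>I. f i \<in> S i)"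
  using assms
proof (induction "card I" arbitrary: I S rule: less_induct)
  case less
  show ?case
  proof (cases "I = {}")
    case True then show ?thesis by auto
  next
    case Ine: False
    show ?thesis
    proof (cases "\<exists>J. J \<subseteq> I \<and> J \<noteq> {} \<and> J \<noteq> I \<and> card (\<Union>(S ` J)) \<le> card J")
      case True
      then obtain J where J: "J \<subseteq> I" "J \<noteq> {}" "J \<noteq> I" "card (\<Union>(S ` J)) \<le> card J" by blast
      have fJ: "finite J" using J(1) less.prems(1) finite_subset by blast
      have cJ: "card J < card I" using J less.prems(1) by (meson psubsetI psubset_card_mono)
      have hJ1: "\<forall>i\<in>J. finite (S i)" using J(1) less.prems(2) by blast
      have hJ2: "\<forall>K\<subseteq>J. card K \<le> card (\<Union>(S ` K))"
      proof (intro allI impI)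
        fix K assume "K \<subseteq> J" then have "K \<subseteq> I" using J(1) by blast
        then show "card K \<le> card (\<Union>(S ` K))" by (rule less.prems(3)[rule_format])
      qed
      obtain f1 where f1: "inj_on f1 J" "\<forall>i\<in>J. f1 i \<in> S i"
        using less.hyps[OF cJ fJ hJ1 hJ2] by blast
      define T where "T = \<Union>(S ` J)"
      have fT: "finite T" unfolding T_def using fJ J(1) less.prems(2) by auto
      have "card J \<le> card T" unfolding T_def using J(1) by (rule less.prems(3)[rule_format])
      then have cT: "card T = card J" using J(4) unfolding T_def by linarith
      have cIJ: "card (I - J) < card I"
        using J less.prems(1) by (metis Diff_subset card_Diff_subset card_gt_0_iff diff_less fJ finite_subset subset_empty)
      have hallIJ: "\<forall>K\<subseteq>I - J. card K \<le> card (\<Union>((\<lambda>i. S i - T) ` K))"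
      proof (intro allI impI)
        fix K assume K: "K \<subseteq> I - J"
        have fK: "finite K" using K less.prems(1) finite_subset by blast
        have eq: "\<Union>((\<lambda>i. S i - T) ` K) = \<Union>(S ` (K \<union> J)) - T" unfolding T_def by auto
        have fU: "finite (\<Union>(S ` (K \<union> J)))" using fK fJ K J(1) less.prems(2) by auto
        have sub: "T \<subseteq> \<Union>(S ` (K \<union> J))" unfolding T_def by auto
        have c1: "card (K \<union> J) = card K + card J" using K fK fJ by (intro card_Un_disjoint) auto
        have "K \<union> J \<subseteq> I" using K J(1) by auto
        then have c2: "card (K \<union> J) \<le> card (\<Union>(S ` (K \<union> J)))" by (rule less.prems(3)[rule_format])
        have c3: "card (\<Union>((\<lambda>i. S i - T) ` K)) = card (\<Union>(S ` (K \<union> J))) - card T"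
          unfolding eq using card_Diff_subset[OF fT sub] .
        show "card K \<le> card (\<Union>((\<lambda>i. S i - T) ` K))" using c1 c2 c3 cT by linarith
      qed
      obtain f2 where f2: "inj_on f2 (I - J)" "\<forall>i\<in>I - J. f2 i \<in> S i - T"
        using less.hyps[OF cIJ, of "\<lambda>i. S i - T"] less.prems(1,2) hallIJ by auto
      define f where "f = (\<lambda>i. if i \<in> J then f1 i else f2 i)"
      have "inj_on f I"
        unfolding inj_on_def
      proof (intro ballI impI)
        fix x y assume xy: "x \<in> I" "y \<in> I" "f x = f y"
        show "x = y"
        proof (cases "x \<in> J"; cases "y \<in> J")
          assume "x \<in> J" "y \<in> J" then show ?thesis using xy f1(1) unfolding f_def inj_on_def by auto
        next
          assume a: "x \<in> J" "y \<notin> J"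
          have "f x \<in> T" using a f1(2) unfolding f_def T_def by auto
          moreover have "f y \<notin> T" using a f2(2) xy(2) unfolding f_def by auto
          ultimately show ?thesis using xy by auto
        next
          assume a: "x \<notin> J" "y \<in> J"
          have "f y \<in> T" using a f1(2) unfolding f_def T_def by auto
          moreover have "f x \<notin> T" using a f2(2) xy(1) unfolding f_def by auto
          ultimately show ?thesis using xy by auto
        next
          assume "x \<notin> J" "y \<notin> J" then show ?thesis using xy f2(1) unfolding f_def inj_on_def by auto
        qed
      qed
      moreover have "\<forall>i\<in>I. f i \<in> S i" using f1(2) f2(2) unfolding f_def by auto
      ultimately show ?thesis by blast
    next
      case False
      then have strict: "\<And>J. J \<subseteq> I \<Longrightarrow> J \<noteq> {} \<Longrightarrow> J \<noteq> I \<Longrightarrow> card J < card (\<Union>(S ` J))"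
        by (meson not_le)
      obtain i0 where i0: "i0 \<in> I" using Ine by blast
      have "{i0} \<subseteq> I" using i0 by blast
      then have "card {i0} \<le> card (\<Union>(S ` {i0}))" by (rule less.prems(3)[rule_format])
      then have "card {i0} \<le> card (S i0)" by simp
      then have "S i0 \<noteq> {}" by auto
      then obtain x where x: "x \<in> S i0" by blast
      have cI: "card (I - {i0}) < card I" using card_Diff1_less[OF less.prems(1) i0] .
      have hall2: "\<forall>K\<subseteq>I - {i0}. card K \<le> card (\<Union>((\<lambda>i. S i - {x}) ` K))"
      proof (intro allI impI)
        fix K assume K: "K \<subseteq> I - {i0}"
        show "card K \<le> card (\<Union>((\<lambda>i. S i - {x}) ` K))"
        proof (cases "K = {}")
          case True then show ?thesis by simp
        next
          case False
          have fK: "finite K" using K less.prems(1) finite_subset by blast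
          have lt: "card K < card (\<Union>(S ` K))" using strict[of K] K False i0 by auto
          have eq: "\<Union>((\<lambda>i. S i - {x}) ` K) = \<Union>(S ` K) - {x}" by auto
          have "card (\<Union>(S ` K)) - card {x} \<le> card (\<Union>(S ` K) - {x})"
            by (rule diff_card_le_card_Diff) simp
          then show ?thesis using lt eq by simp
        qed
      qed
      obtain f' where f': "inj_on f' (I - {i0})" "\<forall>i\<in>I - {i0}. f' i \<in> S i - {x}"
        using less.hyps[OF cI, of "\<lambda>i. S i - {x}"] less.prems(1,2) hall2 by auto
      define f where "f = f'(i0 := x)"
      have "inj_on f I"
      proof -
        have e: "I = insert i0 (I - {i0})" using i0 by auto
        have a1: "inj_on f (I - {i0})" using f'(1) unfolding f_def inj_on_def by auto
        have a2: "f i0 \<notin> f ` (I - {i0})" using f'(2) unfolding f_def by auto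
        have "inj_on f (insert i0 (I - {i0}))"
          apply (rule inj_on_insert[THEN iffD2]) using a1 a2 by simp
        then show ?thesis using e by metis
      qed
      moreover have "\<forall>i\<in>I. f i \<in> S i" using f'(2) x unfolding f_def by auto
      ultimately show ?thesis by blast
    qed
  qed
qed

definition lo :: "nat \<Rightarrow> nat set set \<Rightarrow> nat set set" where
  "lo m A = {X\<in>A. m \<notin> X}"
definition hi :: "nat \<Rightarrow> nat set set \<Rightarrow> nat set set" where
  "hi m A = {X\<in>A. m \<notin> X \<and> insert m X \<in> A}"

lemma down_set_finite: "down_set n A \<Longrightarrow> finite A"
  unfolding down_set_def by (meson finite_Pow_iff finite_atLeastAtMost finite_subset)

lemma down_set_Int: "down_set n A \<Longrightarrow> down_set n B \<Longrightarrow> down_set n (A \<inter> B)"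
  unfolding down_set_def by (metis Int_iff le_infI1)

lemma lo_down: "down_set (Suc n) A \<Longrightarrow> down_set n (lo (Suc n) A)"
  unfolding down_set_def lo_def
proof (intro conjI)
  assume a: "A \<subseteq> Pow {1..Suc n} \<and> (\<forall>B\<in>A. \<forall>A'. A' \<subseteq> B \<longrightarrow> A' \<in> A)"
  show "{X \<in> A. Suc n \<notin> X} \<subseteq> Pow {1..n}"
  proof
    fix X assume "X \<in> {X \<in> A. Suc n \<notin> X}"
    then have "X \<subseteq> {1..Suc n}" "Suc n \<notin> X" using a by auto
    then show "X \<in> Pow {1..n}" by (auto simp: subset_iff le_Suc_eq)
  qed
  show "\<forall>B\<in>{X \<in> A. Suc n \<notin> X}. \<forall>A'. A' \<subseteq> B \<longrightarrow> A' \<in> {X \<in> A. Suc n \<notin> X}"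
    using a by blast
qed

lemma hi_down: "down_set (Suc n) A \<Longrightarrow> down_set n (hi (Suc n) A)"
proof -
  assume d: "down_set (Suc n) A"
  have "hi (Suc n) A \<subseteq> lo (Suc n) A" unfolding hi_def lo_def by blast
  then have "hi (Suc n) A \<subseteq> Pow {1..n}" using lo_down[OF d] unfolding down_set_def by blast
  moreover have "\<forall>B\<in>hi (Suc n) A. \<forall>A'. A' \<subseteq> B \<longrightarrow> A' \<in> hi (Suc n) A"
  proof (intro ballI allI impI)
    fix B A' assume B: "B \<in> hi (Suc n) A" and s: "A' \<subseteq> B"
    then have "insert (Suc n) A' \<subseteq> insert (Suc n) B" by blast
    then show "A' \<in> hi (Suc n) A" using B s d unfolding hi_def down_set_def by blast
  qed
  ultimately show ?thesis unfolding down_set_def by blast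
qed

lemma card_split: "down_set (Suc n) A \<Longrightarrow> card A = card (lo (Suc n) A) + card (hi (Suc n) A)"
proof -
  assume d: "down_set (Suc n) A"
  have f: "finite A" using down_set_finite[OF d] .
  have e: "A = lo (Suc n) A \<union> insert (Suc n) ` hi (Suc n) A"
  proof
    show "A \<subseteq> lo (Suc n) A \<union> insert (Suc n) ` hi (Suc n) A"
    proof
      fix X assume X: "X \<in> A"
      show "X \<in> lo (Suc n) A \<union> insert (Suc n) ` hi (Suc n) A"
      proof (cases "Suc n \<in> X")
        case True
        then have "X - {Suc n} \<in> hi (Suc n) A" "X = insert (Suc n) (X - {Suc n})"
          using X d unfolding hi_def down_set_def by (auto simp: insert_absorb)
        then show ?thesis by blast
      next
        case False then show ?thesis using X unfolding lo_def by blast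
      qed
    qed
    show "lo (Suc n) A \<union> insert (Suc n) ` hi (Suc n) A \<subseteq> A" unfolding lo_def hi_def by blast
  qed
  have inj: "inj_on (insert (Suc n)) (hi (Suc n) A)"
    unfolding inj_on_def hi_def by (metis (no_types, lifting) insert_ident mem_Collect_eq)
  have fl: "finite (lo (Suc n) A)" "finite (hi (Suc n) A)" using f unfolding lo_def hi_def by auto
  have "card A = card (lo (Suc n) A) + card (insert (Suc n) ` hi (Suc n) A)"
    by (subst e, rule card_Un_disjoint) (use fl in \<open>auto simp: lo_def\<close>)
  then show ?thesis using card_image[OF inj] by simp
qed

lemma lo_Int: "lo m (A \<inter> B) = lo m A \<inter> lo m B" unfolding lo_def by blast
lemma hi_Int: "hi m (A \<inter> B) = hi m A \<inter> hi m B" unfolding hi_def by blast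
lemma hi_lo: "hi m A \<subseteq> lo m A" unfolding hi_def lo_def by blast

lemma arith_aux:
  fixes a0 a1 b0 b1 x0 x1 N :: nat
  assumes "a0 * b0 \<le> N * x0" "a1 * b1 \<le> N * x1" "a1 \<le> a0" "b1 \<le> b0"
  shows "(a0 + a1) * (b0 + b1) \<le> 2 * N * (x0 + x1)"
proof -
  obtain p q where p: "a0 = a1 + p" and q: "b0 = b1 + q" using assms(3,4) le_Suc_ex by metis
  have "(a0 + a1) * (b0 + b1) \<le> 2 * (a0 * b0 + a1 * b1)"
    unfolding p q by (simp add: algebra_simps)
  also have "\<dots> \<le> 2 * (N * x0 + N * x1)" using assms(1,2) by simp
  finally show ?thesis by (simp add: algebra_simps)
qed

lemma kleitman: "down_set n A \<Longrightarrow> down_set n B \<Longrightarrow> card A * card B \<le> 2 ^ n * card (A \<inter> B)"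
proof (induction n arbitrary: A B)
  case 0
  then have "A \<subseteq> {{}}" "B \<subseteq> {{}}" unfolding down_set_def by auto
  then show ?case by (auto simp: subset_singleton_iff)
next
  case (Suc n)
  have AB: "down_set (Suc n) (A \<inter> B)" using down_set_Int[OF Suc.prems] .
  have i0: "card (lo (Suc n) A) * card (lo (Suc n) B) \<le> 2 ^ n * card (lo (Suc n) A \<inter> lo (Suc n) B)"
    using Suc.IH[OF lo_down[OF Suc.prems(1)] lo_down[OF Suc.prems(2)]] .
  have i1: "card (hi (Suc n) A) * card (hi (Suc n) B) \<le> 2 ^ n * card (hi (Suc n) A \<inter> hi (Suc n) B)"
    using Suc.IH[OF hi_down[OF Suc.prems(1)] hi_down[OF Suc.prems(2)]] .
  have m1: "card (hi (Suc n) A) \<le> card (lo (Suc n) A)"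
    using card_mono[OF down_set_finite[OF lo_down[OF Suc.prems(1)]] hi_lo] .
  have m2: "card (hi (Suc n) B) \<le> card (lo (Suc n) B)"
    using card_mono[OF down_set_finite[OF lo_down[OF Suc.prems(2)]] hi_lo] .
  have "card A * card B \<le> 2 * 2 ^ n * (card (lo (Suc n) A \<inter> lo (Suc n) B) + card (hi (Suc n) A \<inter> hi (Suc n) B))"
    unfolding card_split[OF Suc.prems(1)] card_split[OF Suc.prems(2)]
    by (rule arith_aux[OF i0 i1 m1 m2])
  also have "\<dots> = 2 ^ Suc n * card (A \<inter> B)"
    unfolding card_split[OF AB] lo_Int hi_Int by simp
  finally show ?case .
qed


lemma card_Pow_n: "card (Pow {1..n::nat}) = 2 ^ n"
  by (simp add: card_Pow)

theorem theorem1p5: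
  fixes n :: nat and \<F> \<G> :: "nat set set"
  assumes "n \<ge> 1"
    and "down_set n \<F>" and "down_set n \<G>"
    and "card \<F> \<le> card \<G>"
  shows "\<exists>\<phi>. inj_on \<phi> \<F> \<and> (\<forall>A\<in>\<F>. kneser_edge \<F> \<G> A (\<phi> A))"
proof -
  let ?P = "Pow {1..n}"
  define S where "S = (\<lambda>A. {G\<in>\<G>. A \<inter> G = {}})"
  have fF: "finite \<F>" using down_set_finite[OF assms(2)] .
  have fG: "finite \<G>" using down_set_finite[OF assms(3)] .
  have FP: "\<F> \<subseteq> ?P" and GP: "\<G> \<subseteq> ?P" using assms(2,3) unfolding down_set_def by auto
  have hallc: "\<forall>J\<subseteq>\<F>. card J \<le> card (\<Union>(S ` J))"
  proof (intro allI impI)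
    fix J assume J: "J \<subseteq> \<F>"
    define U where "U = {X. X \<subseteq> {1..n} \<and> (\<exists>A\<in>J. A \<subseteq> X)}"
    define D where "D = {X. X \<subseteq> {1..n} \<and> (\<exists>A\<in>J. A \<inter> X = {})}"
    define Uc where "Uc = ?P - U"
    have UP: "U \<subseteq> ?P" unfolding U_def by auto
    have fU: "finite U" using UP finite_subset by blast
    have JU: "J \<subseteq> \<F> \<inter> U" using J FP unfolding U_def by auto
    have N: "\<Union>(S ` J) = \<G> \<inter> D" using GP unfolding S_def D_def by auto
    have DU: "D = (\<lambda>X. {1..n} - X) ` U"
    proof
      show "D \<subseteq> (\<lambda>X. {1..n} - X) ` U"
      proof
        fix X assume X: "X \<in> D"
        then obtain A where A: "A \<in> J" "A \<inter> X = {}" and Xs: "X \<subseteq> {1..n}" unfolding D_def by blast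
        have "A \<subseteq> {1..n}" using A(1) J FP by blast
        then have "A \<subseteq> {1..n} - X" using A(2) by blast
        then have "{1..n} - X \<in> U" unfolding U_def using A(1) by blast
        moreover have "X = {1..n} - ({1..n} - X)" using Xs by blast
        ultimately show "X \<in> (\<lambda>X. {1..n} - X) ` U" by blast
      qed
      show "(\<lambda>X. {1..n} - X) ` U \<subseteq> D" unfolding D_def U_def by auto
    qed
    have injc: "inj_on (\<lambda>X. {1..n} - X) U"
      unfolding inj_on_def U_def by auto
    have cD: "card D = card U" unfolding DU using card_image[OF injc] .
    have dD: "down_set n D" unfolding down_set_def D_def by blast
    have dUc: "down_set n Uc" unfolding down_set_def Uc_def U_def by blast
    have k1: "card \<F> * card Uc \<le> 2 ^ n * card (\<F> \<inter> Uc)" using kleitman[OF assms(2) dUc] .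
    have k2: "card \<G> * card D \<le> 2 ^ n * card (\<G> \<inter> D)" using kleitman[OF assms(3) dD] .
    have cU: "card U \<le> 2 ^ n" using card_mono[OF _ UP] card_Pow_n by (metis finite_Pow_iff finite_atLeastAtMost)
    have cUc: "card Uc = 2 ^ n - card U" unfolding Uc_def using card_Diff_subset[OF fU UP] card_Pow_n by simp
    have split: "card \<F> = card (\<F> \<inter> U) + card (\<F> \<inter> Uc)"
    proof -
      have "\<F> = (\<F> \<inter> U) \<union> (\<F> \<inter> Uc)" using FP unfolding Uc_def by blast
      moreover have "card ((\<F> \<inter> U) \<union> (\<F> \<inter> Uc)) = card (\<F> \<inter> U) + card (\<F> \<inter> Uc)"
        by (rule card_Un_disjoint) (use fF in \<open>auto simp: Uc_def\<close>)
      ultimately show ?thesis by simp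
    qed
    have cJ: "card J \<le> card (\<F> \<inter> U)" using card_mono[OF _ JU] fF by blast
    define a where "a = card (\<F> \<inter> U)"
    define b where "b = card (\<F> \<inter> Uc)"
    define u where "u = card U"
    define N where "N = (2::nat) ^ n"
    define x where "x = card (\<G> \<inter> D)"
    have Npos: "N > 0" unfolding N_def by simp
    have h1: "(a + b) * (N - u) \<le> N * b" using k1 split cUc unfolding a_def b_def u_def N_def by simp
    have h2: "(a + b) * u \<le> N * x"
    proof -
      have l1: "(a + b) * u \<le> card \<G> * u" using assms(4) split unfolding a_def b_def by simp
      have l2: "card \<G> * u \<le> N * x" using k2 cD unfolding x_def u_def N_def by simp
      show ?thesis using l1 l2 by (rule order_trans)
    qed
    have uN: "u \<le> N" using cU unfolding u_def N_def .
    have "N * a \<le> (a + b) * u"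
    proof -
      obtain r where r: "N = u + r" using uN le_Suc_ex by blast
      have "(a + b) * r \<le> (u + r) * b" using h1 r by simp
      then show ?thesis using r by (simp add: algebra_simps)
    qed
    then have "N * a \<le> N * x" using h2 by linarith
    then have "a \<le> x" using Npos by simp
    then show "card J \<le> card (\<Union>(S ` J))" using cJ N unfolding a_def x_def by simp
  qed
  have fS: "\<forall>i\<in>\<F>. finite (S i)" unfolding S_def using fG by simp
  obtain f where f: "inj_on f \<F>" "\<forall>i\<in>\<F>. f i \<in> S i" using hall[OF fF fS hallc] by blast
  then show ?thesis unfolding kneser_edge_def S_def by blast
qed

end
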